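(* Let $n\ge 2$ be odd. Then there exists no matching mechanism that is resolute, symmetric (i.e. $G^*$-symmetric) and minimally optimal.
   Context: Fix $n\ge 2$, $W=\{1,\dots,n\}$ (women), $M=\{n+1,\dots,2n\}$ (men), $I=W\cup M$. Permutations compose right-to-left. A preference profile is a function $p$ on $I$ assigning to each $x\in W$ a linear order $p(x)$ on $M$ and to each $y\in M$ a linear order $p(y)$ on $W$; $\mathcal{P}$ is the set of preference profiles. For a linear order $R$ on a set $X$ and $a\in X$, $\mathrm{Rank}_R(a)=|\{b\in X: b\succeq_R a\}|$. A matching is a permutation $\mu$ of $I$ with $\mu(W)=M$, $\mu(M)=W$ and $\mu(\mu(z))=z$ for all $z\in I$; $\mathcal{M}$ is the set of matchings. $\mu$ is minimally optimal for $p$ if there is $z\in I$ with $\mathrm{Rank}_{p(z)}(\mu(z))<n$. Let $G^*=\{\varphi\in\mathrm{Sym}(I):\{\varphi(W),\varphi(M)\}=\{W,M\}\}$. For a linear order $R$ on $X\subseteq I$ and $\varphi\in\mathrm{Sym}(I)$, $\varphi R$ is the relation on $\varphi(X)$ with $(a,b)\in\varphi R$ iff $(\varphi^{-1}(a),\varphi^{-1}(b))\in R$. For $p\in\mathcal{P}$, $\varphi\in G^*$, $p^\varphi(z)=\varphi\,p(\varphi^{-1}(z))$. For a permutation $\mu$, $\mu^\varphi=\varphi\mu\varphi^{-1}$; $S^\varphi=\{\mu^\varphi:\mu\in S\}$. A matching mechanism is a correspondence $F$ from $\mathcal{P}$ to $\mathcal{M}$; it is resolute if $|F(p)|=1$ for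 all $p$; minimally optimal if every $\mu\in F(p)$ is minimally optimal for $p$, for all $p$; symmetric if $F(p^\varphi)=F(p)^\varphi$ for all $p\in\mathcal{P}$, $\varphi\in G^*$. *)

theory Defs
  imports Main "HOL-Combinatorics.Permutations"
begin

type_synonym profile = "nat \<Rightarrow> nat rel"
type_synonym perm = "nat \<Rightarrow> nat"

definition women :: "nat \<Rightarrow> nat set" where "women n = {1..n}"
definition men :: "nat \<Rightarrow> nat set" where "men n = {n+1..2*n}"
definition agents :: "nat \<Rightarrow> nat set" where "agents n = women n \<union> men n"

text \<open>Convention: (a,b) in R means a is weakly preferred to b (a is at least as good as b).\<close>
definition Rank :: "nat rel \<Rightarrow> nat \<Rightarrow> nat" where
  "Rank R a = card {b. (b, a) \<in> R}"

definition profiles :: "nat \<Rightarrow> profile set" where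
  "profiles n = {p. (\<forall>x\<in>women n. linear_order_on (men n) (p x))
                  \<and> (\<forall>y\<in>men n. linear_order_on (women n) (p y))
                  \<and> (\<forall>z. z \<notin> agents n \<longrightarrow> p z = {})}"

definition matchings :: "nat \<Rightarrow> perm set" where
  "matchings n = {\<mu>. \<mu> permutes agents n \<and> \<mu> ` women n = men n \<and> \<mu> ` men n = women n
                     \<and> (\<forall>z\<in>agents n. \<mu> (\<mu> z) = z)}"

definition min_optimal_matching :: "nat \<Rightarrow> profile \<Rightarrow> perm \<Rightarrow> bool" where
  "min_optimal_matching n p \<mu> \<longleftrightarrow> (\<exists>z\<in>agents n. Rank (p z) (\<mu> z) < n)"

definition Gstar :: "nat \<Rightarrow> perm set" where
  "Gstar n = {\<phi>. \<phi> permutes agents n \<and> {\<phi> ` women n, \<phi> ` men n} = {women n, men n}}"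

definition rel_act :: "perm \<Rightarrow> nat rel \<Rightarrow> nat rel" where
  "rel_act \<phi> R = {(a, b). (inv \<phi> a, inv \<phi> b) \<in> R}"

definition profile_act :: "profile \<Rightarrow> perm \<Rightarrow> profile" where
  "profile_act p \<phi> = (\<lambda>z. rel_act \<phi> (p (inv \<phi> z)))"

definition perm_conj :: "perm \<Rightarrow> perm \<Rightarrow> perm" where
  "perm_conj \<mu> \<phi> = \<phi> \<circ> \<mu> \<circ> inv \<phi>"

definition mechanism :: "nat \<Rightarrow> (profile \<Rightarrow> perm set) \<Rightarrow> bool" where
  "mechanism n F \<longleftrightarrow> (\<forall>p\<in>profiles n. F p \<subseteq> matchings n)"

definition resolute :: "nat \<Rightarrow> (profile \<Rightarrow> perm set) \<Rightarrow> bool" where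
  "resolute n F \<longleftrightarrow> (\<forall>p\<in>profiles n. card (F p) = 1)"

definition minimally_optimal :: "nat \<Rightarrow> (profile \<Rightarrow> perm set) \<Rightarrow> bool" where
  "minimally_optimal n F \<longleftrightarrow> (\<forall>p\<in>profiles n. \<forall>\<mu>\<in>F p. min_optimal_matching n p \<mu>)"

definition symmetric_mech :: "nat \<Rightarrow> (profile \<Rightarrow> perm set) \<Rightarrow> bool" where
  "symmetric_mech n F \<longleftrightarrow>
     (\<forall>p\<in>profiles n. \<forall>\<phi>\<in>Gstar n. F (profile_act p \<phi>) = (\<lambda>\<mu>. perm_conj \<mu> \<phi>) ` F p)"

end

theory Submission
  imports Defs
begin


definition pa :: "nat \<Rightarrow> nat \<Rightarrow> nat" where
 "pa n j = (if even (j mod (2*n)) then (j mod (2*n)) div 2 + 1 else n + (j mod (2*n)) div 2 + 1)"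
definition idx :: "nat \<Rightarrow> nat \<Rightarrow> nat" where
 "idx n z = (if z \<le> n then 2*(z-1) else 2*(z-n-1)+1)"
definition psi :: "nat \<Rightarrow> nat \<Rightarrow> nat" where
 "psi n z = (if z \<in> agents n then pa n (idx n z + 1) else z)"
definition dd :: "nat \<Rightarrow> nat \<Rightarrow> nat \<Rightarrow> int" where
 "dd n x y = (int (idx n y) - int (idx n x) - int n - 1) mod int (2*n)"
definition oth :: "nat \<Rightarrow> nat \<Rightarrow> nat set" where
 "oth n x = (if x \<in> women n then men n else women n)"
definition pp :: "nat \<Rightarrow> profile" where
 "pp n x = (if x \<in> agents n then {(y,y'). y \<in> oth n x \<and> y' \<in> oth n x \<and> dd n x y \<le> dd n x y'} else {})"

lemma agents_iff: "z \<in> agents n \<longleftrightarrow> 1 \<le> z \<and> z \<le> 2*n"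
  by (auto simp: agents_def women_def men_def)
lemma women_iff: "z \<in> women n \<longleftrightarrow> 1 \<le> z \<and> z \<le> n"
  by (auto simp: women_def)
lemma men_iff: "z \<in> men n \<longleftrightarrow> n+1 \<le> z \<and> z \<le> 2*n"
  by (auto simp: men_def)

lemma pa_mod: "pa n (j mod (2*n)) = pa n j"
  by (simp add: pa_def)

lemma even_mod2n: "even (j mod (2*n)) \<longleftrightarrow> even (j::nat)"
  by (metis dvd_mod_iff dvd_triv_left even_mod_2_iff mod_mod_cancel)

lemma pa_props:
  assumes "n \<ge> 1"
  shows "pa n j \<in> agents n" "pa n j \<in> women n \<longleftrightarrow> even j" "idx n (pa n j) = j mod (2*n)"
proof -
  define r where "r = j mod (2*n)"
  have r: "r < 2*n" using assms by (simp add: r_def)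
  have e: "even r \<longleftrightarrow> even j" unfolding r_def by (rule even_mod2n)
  show "pa n j \<in> agents n" using r unfolding pa_def r_def[symmetric] agents_iff by auto
  show "pa n j \<in> women n \<longleftrightarrow> even j" using r e unfolding pa_def r_def[symmetric] women_iff
    by auto
  show "idx n (pa n j) = j mod (2*n)" using r unfolding pa_def r_def[symmetric] idx_def
    by (auto elim!: evenE oddE)
qed

lemma idx_props:
  assumes "z \<in> agents n"
  shows "idx n z < 2*n" "pa n (idx n z) = z" "z \<in> women n \<longleftrightarrow> even (idx n z)"
  using assms unfolding agents_iff women_iff idx_def pa_def by auto

lemma psi_pa: "n \<ge> 1 \<Longrightarrow> psi n (pa n j) = pa n (Suc j)"
  using pa_props[of n j] by (simp add: psi_def) (metis mod_Suc_eq pa_mod)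


lemma pa_mod_add: "pa n (x mod (2*n) + c) = pa n (x + c)"
  by (metis mod_add_left_eq pa_mod)

lemma pa_add2n: "pa n (x + 2*n) = pa n x"
  by (metis mod_add_self2 pa_mod)

lemma psi_agent:
  assumes "n \<ge> 1" "z \<in> agents n"
  shows "psi n z = pa n (Suc (idx n z))" "psi n z \<in> agents n"
    "psi n z \<in> women n \<longleftrightarrow> z \<notin> women n"
    "idx n (psi n z) = Suc (idx n z) mod (2*n)"
  using assms pa_props[OF assms(1)] idx_props[OF assms(2)] by (auto simp: psi_def)

definition psiinv :: "nat \<Rightarrow> nat \<Rightarrow> nat" where
  "psiinv n z = pa n (idx n z + (2*n - 1))"

lemma psi_permutes:
  assumes "n \<ge> 1"
  shows "psi n permutes agents n"
proof (rule bij_imp_permutes)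
  show "bij_betw (psi n) (agents n) (agents n)"
  proof (rule bij_betw_byWitness[where f'="psiinv n"])
    show "\<forall>a\<in>agents n. psiinv n (psi n a) = a"
    proof
      fix a assume a: "a \<in> agents n"
      have "psiinv n (psi n a) = pa n (Suc (idx n a) mod (2*n) + (2*n - 1))"
        using psi_agent[OF assms a] by (simp add: psiinv_def)
      also have "\<dots> = pa n (idx n a + 2*n)" unfolding pa_mod_add using assms by simp
      also have "\<dots> = a" using pa_add2n idx_props[OF a] by simp
      finally show "psiinv n (psi n a) = a" .
    qed
    show "\<forall>a\<in>agents n. psi n (psiinv n a) = a"
    proof
      fix a assume a: "a \<in> agents n"
      have "psi n (psiinv n a) = pa n (Suc (idx n a + (2*n - 1)))"
        unfolding psiinv_def using psi_pa[OF assms] by simp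
      also have "\<dots> = pa n (idx n a + 2*n)" using assms by simp
      also have "\<dots> = a" using pa_add2n idx_props[OF a] by simp
      finally show "psi n (psiinv n a) = a" .
    qed
    show "psi n ` agents n \<subseteq> agents n" using psi_agent[OF assms] by auto
    show "psiinv n ` agents n \<subseteq> agents n" using pa_props[OF assms] by (auto simp: psiinv_def)
  qed
  show "\<And>x. x \<notin> agents n \<Longrightarrow> psi n x = x" by (simp add: psi_def)
qed

lemma women_agents: "women n \<subseteq> agents n" and men_agents: "men n \<subseteq> agents n"
  by (auto simp: agents_def)

lemma psi_women: assumes "n \<ge> 1" shows "psi n ` women n = men n" "psi n ` men n = women n"
proof -
  have P: "psi n permutes agents n" by (rule psi_permutes[OF assms])
  have sw: "\<And>z. z \<in> agents n \<Longrightarrow> psi n z \<in> women n \<longleftrightarrow> z \<notin> women n"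
    using psi_agent[OF assms] by blast
  have ag: "\<And>z. psi n z \<in> agents n \<longleftrightarrow> z \<in> agents n" using permutes_in_image[OF P] .
  have mw: "men n = agents n - women n" by (auto simp: agents_def women_def men_def)
  show "psi n ` women n = men n"
  proof
    show "psi n ` women n \<subseteq> men n" using sw ag women_agents mw by blast
    show "men n \<subseteq> psi n ` women n"
    proof
      fix y assume y: "y \<in> men n"
      have "y = psi n (inv (psi n) y)" using permutes_inverses(1)[OF P] by simp
      moreover have "inv (psi n) y \<in> women n" using sw[of "inv (psi n) y"] ag[of "inv (psi n) y"] y mw
        by (metis Diff_iff calculation)
      ultimately show "y \<in> psi n ` women n" by blast
    qed
  qed
  show "psi n ` men n = women n"
  proof
    show "psi n ` men n \<subseteq> women n" using sw ag men_agents mw by blast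
    show "women n \<subseteq> psi n ` men n"
    proof
      fix y assume y: "y \<in> women n"
      have "y = psi n (inv (psi n) y)" using permutes_inverses(1)[OF P] by simp
      moreover have "inv (psi n) y \<in> men n" using sw[of "inv (psi n) y"] ag[of "inv (psi n) y"] y mw women_agents
        by (metis Diff_iff calculation subsetD)
      ultimately show "y \<in> psi n ` men n" by blast
    qed
  qed
qed

lemma psi_Gstar: "n \<ge> 1 \<Longrightarrow> psi n \<in> Gstar n"
  unfolding Gstar_def using psi_permutes psi_women by (auto simp: insert_commute)


lemma dd_inj:
  assumes "n \<ge> 1" "y \<in> agents n" "y' \<in> agents n" "dd n x y = dd n x y'"
  shows "y = y'"
proof -
  define c where "c = int (idx n x) + int n + 1"
  define m where "m = int (2*n)"
  have "(int (idx n y) - c) mod m = (int (idx n y') - c) mod m"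
    using assms(4) by (simp add: dd_def c_def m_def algebra_simps)
  then have "((int (idx n y) - c) + c) mod m = ((int (idx n y') - c) + c) mod m"
    by (metis mod_add_left_eq)
  then have "int (idx n y) mod m = int (idx n y') mod m" by simp
  moreover have "int (idx n y) mod m = int (idx n y)" "int (idx n y') mod m = int (idx n y')"
    using idx_props(1)[OF assms(2)] idx_props(1)[OF assms(3)] by (simp_all add: m_def)
  ultimately have "idx n y = idx n y'" by simp
  then show ?thesis using idx_props(2)[OF assms(2)] idx_props(2)[OF assms(3)] by metis
qed

lemma oth_agents: "oth n x \<subseteq> agents n" by (auto simp: oth_def agents_def)

lemma pp_linear: assumes "n \<ge> 1" "x \<in> agents n" shows "linear_order_on (oth n x) (pp n x)"
proof -
  have E: "pp n x = {(y,y'). y \<in> oth n x \<and> y' \<in> oth n x \<and> dd n x y \<le> dd n x y'}"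
    using assms(2) by (simp add: pp_def)
  have A: "antisym (pp n x)"
  proof (rule antisymI)
    fix a b assume "(a,b) \<in> pp n x" "(b,a) \<in> pp n x"
    then have "a \<in> oth n x" "b \<in> oth n x" "dd n x a = dd n x b" unfolding E by auto
    then show "a = b" using dd_inj[OF assms(1)] oth_agents[of n x] by blast
  qed
  have T: "trans (pp n x)" unfolding trans_def E by auto
  have R: "refl_on (oth n x) (pp n x)" unfolding refl_on_def E by auto
  have S: "pp n x \<subseteq> oth n x \<times> oth n x" unfolding E by auto
  have To: "total_on (oth n x) (pp n x)" unfolding total_on_def E by auto
  show ?thesis unfolding linear_order_on_def partial_order_on_def preorder_on_def
    using A T R S To by blast
qed

lemma pp_profiles: assumes "n \<ge> 1" shows "pp n \<in> profiles n"
proof -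
  have W: "\<And>x. x \<in> women n \<Longrightarrow> oth n x = men n" by (simp add: oth_def)
  have M: "\<And>x. x \<in> men n \<Longrightarrow> oth n x = women n" by (auto simp: oth_def women_def men_def)
  have 1: "\<forall>x\<in>women n. linear_order_on (men n) (pp n x)"
    using pp_linear[OF assms] W women_agents by (metis subsetD)
  have 2: "\<forall>x\<in>men n. linear_order_on (women n) (pp n x)"
    using pp_linear[OF assms] M men_agents by (metis subsetD)
  have 3: "\<forall>z. z \<notin> agents n \<longrightarrow> pp n z = {}" by (simp add: pp_def)
  show ?thesis unfolding profiles_def using 1 2 3 by blast
qed



lemma mod_aux: "((x::int) mod m - y mod m - k) mod m = (x - y - k) mod m"
proof -
  have "(x mod m - y mod m - k) mod m = ((x mod m - y mod m) mod m - k) mod m"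
    by (rule mod_diff_left_eq[symmetric])
  also have "(x mod m - y mod m) mod m = (x - y) mod m" by (rule mod_diff_eq)
  also have "((x - y) mod m - k) mod m = (x - y - k) mod m" by (rule mod_diff_left_eq)
  finally show ?thesis .
qed
lemma mod_shift_aux: "(int (Suc a mod m) - int (Suc b mod m) - k) mod int m = (int a - int b - k) mod (int m)"
proof -
  have "(int (Suc a mod m) - int (Suc b mod m) - k) mod int m
        = (int (Suc a) mod int m - int (Suc b) mod int m - k) mod int m" by (simp only: zmod_int)
  also have "\<dots> = (int (Suc a) - int (Suc b) - k) mod int m"
    by (rule mod_aux)
  also have "\<dots> = (int a - int b - k) mod int m" by simp
  finally show ?thesis .
qed


lemma dd_psi: assumes "n \<ge> 1" "x \<in> agents n" "y \<in> agents n"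
  shows "dd n (psi n x) (psi n y) = dd n x y"
  unfolding dd_def psi_agent(4)[OF assms(1,2)] psi_agent(4)[OF assms(1,3)]
  using mod_shift_aux[of "idx n y" "2*n" "idx n x" "int n + 1"] by (simp add: algebra_simps)

lemma oth_psi: assumes "n \<ge> 1" "x \<in> agents n" "y \<in> agents n"
  shows "psi n y \<in> oth n (psi n x) \<longleftrightarrow> y \<in> oth n x"
proof -
  have mw: "men n = agents n - women n" by (auto simp: agents_def women_def men_def)
  have a: "psi n x \<in> women n \<longleftrightarrow> x \<notin> women n" "psi n y \<in> women n \<longleftrightarrow> y \<notin> women n"
    "psi n y \<in> agents n"
    using psi_agent[OF assms(1,2)] psi_agent[OF assms(1,3)] by blast+
  show ?thesis unfolding oth_def mw using a assms(3) by (cases "x \<in> women n") simp_all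
qed

lemma pp_inv: assumes "n \<ge> 1" shows "profile_act (pp n) (psi n) = pp n"
proof
  fix z
  have P: "psi n permutes agents n" by (rule psi_permutes[OF assms])
  have Pi: "inv (psi n) permutes agents n" by (rule permutes_inv[OF P])
  show "profile_act (pp n) (psi n) z = pp n z"
  proof (cases "z \<in> agents n")
    case False
    then have "inv (psi n) z = z" using permutes_not_in[OF Pi] by blast
    then show ?thesis using False by (simp add: profile_act_def rel_act_def pp_def)
  next
    case True
    define x where "x = inv (psi n) z"
    have x: "x \<in> agents n" "z = psi n x" unfolding x_def
      using permutes_in_image[OF Pi, of z] True permutes_inverses(1)[OF P, of z] by simp_all
    have key: "(psi n a, psi n b) \<in> pp n (psi n x) \<longleftrightarrow> (a, b) \<in> pp n x" for a b
    proof (cases "a \<in> agents n \<and> b \<in> agents n")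
      case True
      then have a: "a \<in> agents n" and b: "b \<in> agents n" by auto
      have px: "psi n x \<in> agents n" by (rule psi_agent(2)[OF assms x(1)])
      show ?thesis unfolding pp_def using px x(1) oth_psi[OF assms x(1) a] oth_psi[OF assms x(1) b]
        dd_psi[OF assms x(1) a] dd_psi[OF assms x(1) b] by simp
    next
      case False
      then have "psi n a \<notin> agents n \<or> psi n b \<notin> agents n" using permutes_in_image[OF P] by blast
      moreover have "\<And>u. pp n u \<subseteq> agents n \<times> agents n" using oth_agents[of n] by (auto simp: pp_def)
      ultimately show ?thesis using False by blast
    qed
    have "profile_act (pp n) (psi n) z = {(a, b). (inv (psi n) a, inv (psi n) b) \<in> pp n x}"
      by (simp add: profile_act_def rel_act_def x_def)
    also have "\<dots> = pp n z"
    proof safe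
      fix a b assume "(inv (psi n) a, inv (psi n) b) \<in> pp n x"
      then show "(a,b) \<in> pp n z" using key[of "inv (psi n) a" "inv (psi n) b"] x(2)
        permutes_inverses(1)[OF P] by simp
    next
      fix a b assume "(a,b) \<in> pp n z"
      then show "(inv (psi n) a, inv (psi n) b) \<in> pp n x" using key[of "inv (psi n) a" "inv (psi n) b"] x(2)
        permutes_inverses(1)[OF P] by simp
    qed
    finally show ?thesis .
  qed
qed



lemma comm_unique:
  assumes n: "n \<ge> 1" and mu: "\<mu> \<in> matchings n" and comm: "\<And>x. \<mu> (psi n x) = psi n (\<mu> x)"
    and z: "z \<in> agents n"
  shows "\<mu> z = pa n (idx n z + n)"
proof -
  have P: "\<mu> permutes agents n" using mu by (simp add: matchings_def)
  have inv: "\<And>z. z \<in> agents n \<Longrightarrow> \<mu> (\<mu> z) = z" using mu by (simp add: matchings_def)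
  have WM: "\<mu> ` women n = men n" using mu by (simp add: matchings_def)
  define k where "k = idx n (\<mu> (pa n 0))"
  have a0: "pa n 0 \<in> agents n" by (rule pa_props(1)[OF n])
  have m0: "\<mu> (pa n 0) \<in> agents n" using permutes_in_image[OF P] a0 by blast
  have k: "k < 2*n" "\<mu> (pa n 0) = pa n k" using idx_props[OF m0] by (simp_all add: k_def)
  have all: "\<mu> (pa n j) = pa n (j + k)" for j
  proof (induction j)
    case 0 then show ?case using k by simp
  next
    case (Suc j)
    have "\<mu> (pa n (Suc j)) = \<mu> (psi n (pa n j))" using psi_pa[OF n] by simp
    also have "\<dots> = psi n (pa n (j + k))" using comm Suc by simp
    also have "\<dots> = pa n (Suc j + k)" using psi_pa[OF n] by simp
    finally show ?case .
  qed
  have "pa n (k + k) = pa n 0" using inv[OF a0] all[of k] k(2) by simp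
  then have "idx n (pa n (k+k)) = idx n (pa n 0)" by simp
  then have "(k + k) mod (2*n) = 0" using pa_props(3)[OF n] by simp
  then have "k = 0 \<or> k = n"
  proof -
    assume "(k + k) mod (2*n) = 0"
    then obtain q where q: "k + k = 2*n*q" by (auto simp: mod_eq_0_iff_dvd elim!: dvdE)
    have "k + k < 2*n*2" using k(1) by linarith
    then have "2*n*q < 2*n*2" using q by (simp only:)
    then have "q < 2" using n by simp
    then have "q = 0 \<or> q = 1" by auto
    then show ?thesis
    proof
      assume "q = 0" then show ?thesis using q by simp
    next
      assume "q = 1" then show ?thesis using q by simp
    qed
  qed
  moreover have "k \<noteq> 0"
  proof
    assume "k = 0"
    then have "\<mu> (pa n 0) = pa n 0" using k by simp
    moreover have "pa n 0 \<in> women n" using pa_props(2)[OF n] by simp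
    moreover have "women n \<inter> men n = {}" by (auto simp: women_def men_def)
    ultimately have "pa n 0 \<in> men n" "pa n 0 \<in> women n" using WM imageI[of "pa n 0" "women n" \<mu>]
      by simp_all
    then show False using \<open>women n \<inter> men n = {}\<close> by blast
  qed
  ultimately have "k = n" by blast
  then show ?thesis using all[of "idx n z"] idx_props(2)[OF z] by simp
qed



lemma rank_worst:
  assumes n: "n \<ge> 1" and odd: "odd n" and z: "z \<in> agents n"
  shows "Rank (pp n z) (pa n (idx n z + n)) = n"
proof -
  define w where "w = pa n (idx n z + n)"
  have mw: "men n = agents n - women n" by (auto simp: agents_def women_def men_def)
  have wa: "w \<in> agents n" unfolding w_def by (rule pa_props(1)[OF n])
  have ww: "w \<in> women n \<longleftrightarrow> z \<notin> women n"
    unfolding w_def pa_props(2)[OF n] idx_props(3)[OF z] using odd by simp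
  have woth: "w \<in> oth n z" unfolding oth_def mw using wa ww by (cases "z \<in> women n") simp_all
  have "dd n z w = (int ((idx n z + n) mod (2*n)) - int (idx n z) - int n - 1) mod int (2*n)"
    unfolding dd_def w_def pa_props(3)[OF n] by simp
  also have "\<dots> = (int (idx n z + n) mod int (2*n) - (int (idx n z) + int n + 1)) mod int (2*n)"
    by (simp only: zmod_int diff_diff_eq)
  also have "\<dots> = (int (idx n z + n) - (int (idx n z) + int n + 1)) mod int (2*n)"
    by (rule mod_diff_left_eq)
  also have "\<dots> = (-1) mod int (2*n)" by simp
  also have "\<dots> = int (2*n) - 1" using n by (simp add: zmod_minus1)
  finally have dw: "dd n z w = int (2*n) - 1" .
  have le: "dd n z b \<le> dd n z w" for b
  proof -
    have "dd n z b < int (2*n)" unfolding dd_def using n by simp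
    then show ?thesis unfolding dw by linarith
  qed
  have "{b. (b, w) \<in> pp n z} = oth n z"
    using z woth le by (auto simp: pp_def)
  moreover have "card (oth n z) = n" by (simp add: oth_def women_def men_def)
  ultimately show ?thesis unfolding Rank_def w_def by simp
qed



theorem theorem4:
  fixes n :: nat
  assumes "n \<ge> 2" and "odd n"
  shows "\<not> (\<exists>F. mechanism n F \<and> resolute n F \<and> symmetric_mech n F \<and> minimally_optimal n F)"
proof
  assume "\<exists>F. mechanism n F \<and> resolute n F \<and> symmetric_mech n F \<and> minimally_optimal n F"
  then obtain F where M: "mechanism n F" and R: "resolute n F" and S: "symmetric_mech n F"
    and O: "minimally_optimal n F" by blast
  have n: "n \<ge> 1" using assms(1) by simp
  have pP: "pp n \<in> profiles n" by (rule pp_profiles[OF n])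
  have card1: "card (F (pp n)) = 1" using R pP by (simp add: resolute_def)
  then obtain \<mu> where Fmu: "F (pp n) = {\<mu>}" by (rule card_1_singletonE)
  have mu: "\<mu> \<in> matchings n" using M pP Fmu by (auto simp: mechanism_def)
  have G: "psi n \<in> Gstar n" by (rule psi_Gstar[OF n])
  have "F (profile_act (pp n) (psi n)) = (\<lambda>\<mu>. perm_conj \<mu> (psi n)) ` F (pp n)"
    using S pP G by (simp add: symmetric_mech_def)
  then have "{\<mu>} = {perm_conj \<mu> (psi n)}" using Fmu pp_inv[OF n] by simp
  then have eq: "\<mu> = psi n \<circ> \<mu> \<circ> inv (psi n)" by (simp add: perm_conj_def)
  have P: "psi n permutes agents n" by (rule psi_permutes[OF n])
  have comm: "\<mu> (psi n x) = psi n (\<mu> x)" for x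
  proof -
    have "\<mu> (psi n x) = psi n (\<mu> (inv (psi n) (psi n x)))" using eq by (metis comp_apply)
    then show ?thesis using permutes_inverses(2)[OF P] by simp
  qed
  have "min_optimal_matching n (pp n) \<mu>" using O pP Fmu by (simp add: minimally_optimal_def)
  then obtain z where z: "z \<in> agents n" and lt: "Rank (pp n z) (\<mu> z) < n"
    by (auto simp: min_optimal_matching_def)
  have "\<mu> z = pa n (idx n z + n)" by (rule comm_unique[OF n mu comm z])
  then show False using lt rank_worst[OF n assms(2) z] by simp
qed


end
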